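(* Let $f(x;q)=\sum_{n\ge0}\frac{x^n}{n!}q^{n(n-1)/2}$ for $x,q\in\mathbb C$, $|q|<1$. Assume that for some $k\in\mathbb N\cup\{0\}$, $u>0$ and $t\in(0,1)$, \[ G_k(u;t):=k!\sum_{n\ge0}\frac{u^{n-k}}{n!}t^{(n-k)^2/2}\le 2. \] Then for every $q\in\mathbb C$ with $0<|q|<t$, the function $x\mapsto f(x;q)$ has exactly $k$ zeros (counted with multiplicity) in the open disk $\{|x|<r\}$ with $r=u|q|^{1/2-k}$, and no zeros on the circle $|x|=r$. *)

theory Defs
  imports "HOL-Complex_Analysis.Complex_Analysis"
begin

definition qf :: "complex \<Rightarrow> complex \<Rightarrow> complex" where
  "qf q x = (\<Sum>n. x ^ n / of_nat (fact n) * q ^ (n * (n - 1) div 2))"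

definition G :: "nat \<Rightarrow> real \<Rightarrow> real \<Rightarrow> real" where
  "G k u t = fact k * (\<Sum>n. u powr (real n - real k) / fact n
                            * t powr ((real n - real k)^2 / 2))"

end

theory Submission
  imports Defs
begin

definition Ek :: "nat \<Rightarrow> real \<Rightarrow> real \<Rightarrow> nat \<Rightarrow> real" where
  "Ek k u v n = fact k * (u powr (real n - real k) / fact n * v powr ((real n - real k)^2 / 2))"

definition cq :: "complex \<Rightarrow> nat \<Rightarrow> complex" where
  "cq q n = q ^ (n * (n - 1) div 2) / of_nat (fact n)"

lemma Ek_nonneg: "0 \<le> Ek k u v n"
  unfolding Ek_def by simp

lemma Ek_summable:
  assumes "u > 0" "0 < v" "v \<le> 1"
  shows "summable (Ek k u v)"
proof (rule summable_comparison_test')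
  show "summable (\<lambda>n. fact k * u powr (- real k) * (inverse (fact n) * u ^ n))"
    by (intro summable_mult summable_exp)
  fix n :: nat
  have "v powr ((real n - real k)^2 / 2) \<le> 1"
    using assms by (intro powr_le1) auto
  moreover have "u powr (real n - real k) = u ^ n * u powr (- real k)"
    using assms by (simp add: powr_add[symmetric] powr_realpow[symmetric])
  ultimately show "norm (Ek k u v n) \<le> fact k * u powr (- real k) * (inverse (fact n) * u ^ n)"
    unfolding Ek_def using assms
    by (auto simp: divide_simps mult_left_le)
qed

lemma Ek_at_k: "u > 0 \<Longrightarrow> v > 0 \<Longrightarrow> Ek k u v k = 1"
  unfolding Ek_def by simp

lemma G_eq: assumes "u > 0" "0 < v" "v \<le> 1" shows "G k u v = suminf (Ek k u v)"
proof -
  have s: "summable (\<lambda>n. u powr (real n - real k) / fact n * v powr ((real n - real k)^2 / 2))"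
  proof -
    have "(\<lambda>n. u powr (real n - real k) / fact n * v powr ((real n - real k)^2 / 2))
       = (\<lambda>n. inverse (fact k) * Ek k u v n)" by (simp add: Ek_def fun_eq_iff)
    then show ?thesis using Ek_summable[OF assms, of k] summable_mult by metis
  qed
  show ?thesis unfolding G_def Ek_def using suminf_mult[OF s, of "fact k"] by simp
qed

lemma real_tri: "real (n * (n - 1) div 2) = real n * (real n - 1) / 2"
proof -
  have "even (n * (n - 1))" by auto
  then have "real (n * (n - 1) div 2) = real (n * (n - 1)) / 2"
    by (simp add: real_of_nat_div)
  also have "real (n * (n - 1)) = real n * (real n - 1)"
    by (cases n) (auto simp: algebra_simps)
  finally show ?thesis .
qed

lemma expo_id: "(n::real) * (n - 1) / 2 * L + n * (U + (1/2 - k) * L) = (k * (k - 1)/2 * L + k * (U + (1/2 - k)*L)) + ((n - k) * U + (n - k)^2/2 * L)"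
  unfolding power2_eq_square by (simp add: diff_divide_distrib add_divide_distrib ring_distribs)

lemma key_identity:
  fixes k n :: nat and u s :: real
  assumes "u > 0" "s > 0"
  defines "r \<equiv> u * s powr (1/2 - real k)"
  shows "s ^ (n * (n - 1) div 2) / fact n * r ^ n
       = (s ^ (k * (k - 1) div 2) / fact k * r ^ k) * Ek k u s n"
proof -
  have r: "r > 0" unfolding r_def using assms by simp
  have lr: "ln r = ln u + (1/2 - real k) * ln s"
    unfolding r_def using assms by (simp add: ln_mult ln_powr)
  have pw0: "\<And>x::real. \<And>m. x > 0 \<Longrightarrow> x ^ m = exp (real m * ln x)"
    by (metis exp_ln exp_of_nat_mult)
  have pw: "\<And>m. s ^ m = exp (real m * ln s)" "\<And>m. r ^ m = exp (real m * ln r)"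
    using pw0 assms(2) r by blast+
  have e1: "u powr (real n - real k) = exp ((real n - real k) * ln u)"
    using assms by (simp add: powr_def)
  have e2: "s powr ((real n - real k)^2 / 2) = exp ((real n - real k)^2 / 2 * ln s)"
    using assms by (simp add: powr_def)
  have ex: "real (n * (n - 1) div 2) * ln s + real n * ln r
      = (real (k * (k - 1) div 2) * ln s + real k * ln r) + ((real n - real k) * ln u
         + (real n - real k)^2 / 2 * ln s)"
    unfolding real_tri lr by (rule expo_id)
  have "s ^ (n * (n - 1) div 2) * r ^ n
       = (s ^ (k * (k - 1) div 2) * r ^ k) * (u powr (real n - real k) * s powr ((real n - real k)^2 / 2))"
  proof -
    have "s ^ (n * (n - 1) div 2) * r ^ n = exp (real (n * (n - 1) div 2) * ln s + real n * ln r)"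
      unfolding pw by (simp only: exp_add)
    also have "\<dots> = exp ((real (k * (k - 1) div 2) * ln s + real k * ln r) + ((real n - real k) * ln u
         + (real n - real k)^2 / 2 * ln s))" by (simp only: ex)
    also have "\<dots> = (s ^ (k * (k - 1) div 2) * r ^ k) * (u powr (real n - real k) * s powr ((real n - real k)^2 / 2))"
      unfolding pw e1 e2 by (simp only: exp_add)
    finally show ?thesis .
  qed
  then show ?thesis unfolding Ek_def by (simp add: field_simps)
qed

lemma Ek_mono:
  assumes "0 < a" "a \<le> b"
  shows "Ek k u a n \<le> Ek k u b n"
  unfolding Ek_def using assms
  by (intro mult_left_mono mult_left_mono powr_mono2) auto

lemma Ek_strict:
  assumes "u > 0" "0 < a" "a < b" "n \<noteq> k"
  shows "Ek k u a n < Ek k u b n"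
proof -
  have "(real n - real k)^2 / 2 > 0" using assms(4) by simp
  then have "a powr ((real n - real k)^2 / 2) < b powr ((real n - real k)^2 / 2)"
    using assms by (intro powr_less_mono2) auto
  moreover have "fact k * (u powr (real n - real k) / fact n) > 0" using assms by simp
  ultimately show ?thesis unfolding Ek_def
    by (metis mult.assoc mult_strict_left_mono)
qed

lemma qf_eq: "qf q x = (\<Sum>n. cq q n * x ^ n)"
  unfolding qf_def cq_def by (simp add: ac_simps divide_inverse)

lemma norm_cq: "norm (cq q n) = norm q ^ (n * (n - 1) div 2) / fact n"
  unfolding cq_def by (simp add: norm_divide norm_power)

lemma cq_summable:
  assumes "norm q \<le> 1"
  shows "summable (\<lambda>n. norm (cq q n * x ^ n))"
proof (rule summable_comparison_test')
  show "summable (\<lambda>n. inverse (fact n) * norm x ^ n)" by (rule summable_exp)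
  fix n :: nat
  have "norm q ^ (n * (n - 1) div 2) \<le> 1" using assms by (simp add: power_le_one)
  then show "norm (norm (cq q n * x ^ n)) \<le> inverse (fact n) * norm x ^ n"
    by (simp add: norm_mult norm_cq norm_power divide_inverse mult_right_le_one_le
        mult_left_le_one_le mult_le_cancel_right1 mult_right_mono)
qed

lemma qf_fun: "qf q = (\<lambda>x. \<Sum>n. cq q n * x ^ n)"
  using qf_eq by (simp add: fun_eq_iff)

lemma qf_deriv:
  assumes "norm q \<le> 1"
  shows "(qf q has_field_derivative (\<Sum>n. diffs (cq q) n * x ^ n)) (at x)"
  unfolding qf_fun
  by (rule termdiffs_strong_converges_everywhere) (rule summable_norm_cancel[OF cq_summable[OF assms]])

lemma qf_holo:
  assumes "norm q \<le> 1"
  shows "qf q holomorphic_on UNIV"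
  unfolding holomorphic_on_def
  using qf_deriv[OF assms] field_differentiable_def field_differentiable_at_within by blast

lemma qf_nonconst:
  assumes "norm q \<le> 1"
  shows "\<not> qf q constant_on UNIV"
proof
  assume "qf q constant_on UNIV"
  then obtain c where c: "\<And>x. qf q x = c" unfolding constant_on_def by blast
  then have "qf q = (\<lambda>_. c)" by (simp add: fun_eq_iff)
  then have "(qf q has_field_derivative 0) (at 0)" by simp
  moreover have "(qf q has_field_derivative 1) (at 0)"
    using qf_deriv[OF assms, of 0] by (simp only: powser_zero) (simp add: diffs_def cq_def)
  ultimately show False using DERIV_unique by fastforce
qed

lemma key_ineq:
  fixes k :: nat and u t :: real and q x :: complex
  assumes u: "u > 0" and t: "0 < t" "t < 1" and G: "G k u t \<le> 2" and q: "0 < norm q" "norm q < t"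
    and nx0: "norm x = u * norm q powr (1/2 - real k)"
  shows "norm (qf q x - cq q k * x ^ k) < norm (cq q k * x ^ k)"
proof -
  define s where "s = norm q"
  define r where "r = u * s powr (1/2 - real k)"
  have s: "0 < s" "s < t" "s \<le> 1" using q t unfolding s_def by auto
  have nx: "norm x = r" using nx0 unfolding r_def s_def .
  have r0: "r > 0" unfolding r_def using u s by simp
  define A where "A = s ^ (k * (k - 1) div 2) / fact k * r ^ k"
  have A0: "A > 0" unfolding A_def using s r0 by simp
  have nterm: "norm (cq q n * x ^ n) = A * Ek k u s n" for n
  proof -
    have "norm (cq q n * x ^ n) = s ^ (n * (n - 1) div 2) / fact n * r ^ n"
      by (simp add: norm_mult norm_cq norm_power nx s_def)
    also have "\<dots> = A * Ek k u s n"
      unfolding A_def r_def by (rule key_identity[OF u s(1)])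
    finally show ?thesis .
  qed
  have nf: "norm (cq q k * x ^ k) = A" using nterm[of k] Ek_at_k[OF u s(1)] by simp
  define b where "b n = (if n = k then 0 else Ek k u s n)" for n
  define c where "c n = (if n = k then 0 else Ek k u t n)" for n
  have sumEs: "summable (Ek k u s)" using Ek_summable[OF u s(1) s(3)] .
  have sumEt: "summable (Ek k u t)" using Ek_summable[OF u t(1)] t(2) by simp
  have "(\<lambda>n. Ek k u s n - (if n = k then Ek k u s n else 0)) sums (suminf (Ek k u s) - Ek k u s k)"
    by (intro sums_diff summable_sums sumEs sums_single)
  moreover have "(\<lambda>n. Ek k u s n - (if n = k then Ek k u s n else 0)) = b"
    by (auto simp: b_def fun_eq_iff)
  ultimately have bs: "b sums (suminf (Ek k u s) - 1)" using Ek_at_k[OF u s(1)] by simp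
  have "(\<lambda>n. Ek k u t n - (if n = k then Ek k u t n else 0)) sums (suminf (Ek k u t) - Ek k u t k)"
    by (intro sums_diff summable_sums sumEt sums_single)
  moreover have "(\<lambda>n. Ek k u t n - (if n = k then Ek k u t n else 0)) = c"
    by (auto simp: c_def fun_eq_iff)
  ultimately have cs: "c sums (suminf (Ek k u t) - 1)" using Ek_at_k[OF u t(1)] by simp
  have "suminf (Ek k u t) \<le> 2" using G G_eq[OF u t(1)] t(2) by simp
  then have c1: "suminf c \<le> 1" using cs sums_unique by fastforce
  have dcs: "(\<lambda>n. c n - b n) sums (suminf c - suminf b)"
    using bs cs by (intro sums_diff) (auto simp: sums_iff)
  have "0 < suminf (\<lambda>n. c n - b n)"
  proof (rule suminf_pos2[of _ "Suc k"])
    show "summable (\<lambda>n. c n - b n)" using dcs by (simp add: sums_iff)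
    show "0 \<le> c n - b n" for n
      using Ek_mono[OF s(1), of t k u n] s unfolding b_def c_def by auto
    show "0 < c (Suc k) - b (Suc k)"
      using Ek_strict[OF u s(1) s(2), of "Suc k"] unfolding b_def c_def by auto
  qed
  then have b1: "suminf b < 1" using dcs c1 sums_unique by fastforce
  define d where "d n = (if n = k then 0 else cq q n * x ^ n)" for n
  have "(\<lambda>n. cq q n * x ^ n - (if n = k then cq q n * x ^ n else 0)) sums (qf q x - cq q k * x ^ k)"
    unfolding qf_eq
    by (intro sums_diff summable_sums sums_single summable_norm_cancel[OF cq_summable]) (use s s_def in auto)
  moreover have "(\<lambda>n. cq q n * x ^ n - (if n = k then cq q n * x ^ n else 0)) = d"
    by (auto simp: d_def fun_eq_iff)
  ultimately have ds: "d sums (qf q x - cq q k * x ^ k)" by simp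
  have nd: "(\<lambda>n. norm (d n)) = (\<lambda>n. A * b n)"
    by (auto simp: d_def b_def nterm fun_eq_iff)
  have sb: "summable b" using bs by (simp add: sums_iff)
  have snd: "summable (\<lambda>n. norm (d n))" unfolding nd by (intro summable_mult sb)
  have "norm (qf q x - cq q k * x ^ k) = norm (suminf d)" using ds sums_unique by fastforce
  also have "\<dots> \<le> suminf (\<lambda>n. norm (d n))" by (rule summable_norm[OF snd])
  also have "\<dots> = A * suminf b" unfolding nd by (rule suminf_mult[OF sb])
  also have "\<dots> < A" using A0 b1 by simp
  finally show ?thesis using nf by simp
qed

theorem lemma1:
  fixes k :: nat and u t :: real and q :: complex
  assumes "u > 0" and "0 < t" and "t < 1"
    and "G k u t \<le> 2"
    and "0 < norm q" and "norm q < t"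
  defines "r \<equiv> u * norm q powr (1/2 - real k)"
  shows "finite {z \<in> ball 0 r. qf q z = 0}
         \<and> (\<Sum>z \<in> {z \<in> ball 0 r. qf q z = 0}. zorder (qf q) z) = int k
         \<and> (\<forall>z \<in> sphere 0 r. qf q z \<noteq> 0)"
proof -
  have r0: "r > 0" unfolding r_def using assms by simp
  have q1: "norm q \<le> 1" using assms by simp
  define fk where "fk = (\<lambda>p. cq q k * p ^ k)"
  define gk where "gk = (\<lambda>p. qf q p - cq q k * p ^ k)"
  have fg: "(\<lambda>p. fk p + gk p) = qf q" by (simp add: fk_def gk_def fun_eq_iff)
  have ineq: "norm (gk x) < norm (fk x)" if "norm x = r" for x
    unfolding fk_def gk_def using key_ineq[OF assms(1-6)] that r_def by simp
  have nz: "\<forall>z \<in> sphere 0 r. qf q z \<noteq> 0"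
  proof
    fix z :: complex assume "z \<in> sphere 0 r"
    then have "norm z = r" by simp
    from ineq[OF this] show "qf q z \<noteq> 0"
      unfolding fk_def gk_def by (auto simp: norm_minus_commute)
  qed
  have holo: "qf q holomorphic_on UNIV" using qf_holo[OF q1] .
  have finC: "finite {z \<in> cball 0 (r+1). qf q z = 0}"
    by (rule holomorphic_compact_finite_zeros[OF holo]) (auto simp: qf_nonconst[OF q1])
  have finR: "finite {z \<in> ball 0 (r+1). qf q z = 0}"
    by (rule finite_subset[OF _ finC]) auto
  have fin: "finite {z \<in> ball 0 r. qf q z = 0}"
    by (rule finite_subset[OF _ finC]) auto
  have cq0: "cq q k \<noteq> 0" using assms unfolding cq_def by auto
  have finf: "finite {p \<in> ball 0 (r+1). fk p = 0}"
    by (rule finite_subset[of _ "{0}"]) (auto simp: fk_def cq0)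
  have homo: "\<forall>z. z \<notin> ball 0 (r+1) \<longrightarrow> winding_number (circlepath 0 r) z = 0"
  proof (intro allI impI)
    fix z :: complex assume "z \<notin> ball 0 (r+1)"
    then show "winding_number (circlepath 0 r) z = 0"
      using r0 by (intro winding_number_zero_outside[of _ "cball 0 r"])
        (auto simp: valid_path_imp_path sphere_cball)
  qed
  have R: "(\<Sum>p\<in>{p \<in> ball 0 (r+1). (\<lambda>p. fk p + gk p) p = 0}.
              winding_number (circlepath 0 r) p * zorder (\<lambda>p. fk p + gk p) p)
         = (\<Sum>p\<in>{p \<in> ball 0 (r+1). fk p = 0}. winding_number (circlepath 0 r) p * zorder fk p)"
  proof (rule Rouche_theorem)
    show "finite {p \<in> ball 0 (r+1). fk p + gk p = 0}" using finR fg by (simp add: fun_eq_iff)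
    show "finite {p \<in> ball 0 (r+1). fk p = 0}" by (rule finf)
    show "fk holomorphic_on ball 0 (r+1)" unfolding fk_def by (intro holomorphic_intros)
    show "gk holomorphic_on ball 0 (r+1)" unfolding gk_def
      by (intro holomorphic_intros holomorphic_on_subset[OF holo]) auto
    show "path_image (circlepath 0 r) \<subseteq> ball 0 (r+1)" using r0 by auto
    show "\<forall>z\<in>path_image (circlepath 0 r). cmod (gk z) < cmod (fk z)"
      using ineq r0 by auto
  qed (use homo in auto)
  have L: "(\<Sum>p\<in>{p \<in> ball 0 (r+1). qf q p = 0}. winding_number (circlepath 0 r) p * zorder (qf q) p)
        = of_int (\<Sum>z \<in> {z \<in> ball 0 r. qf q z = 0}. zorder (qf q) z)"
  proof -
    have "(\<Sum>p\<in>{p \<in> ball 0 (r+1). qf q p = 0}. winding_number (circlepath 0 r) p * zorder (qf q) p)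
        = (\<Sum>p\<in>{p \<in> ball 0 r. qf q p = 0}. winding_number (circlepath 0 r) p * zorder (qf q) p)"
    proof (rule sum.mono_neutral_right[OF finR])
      show "{p \<in> ball 0 r. qf q p = 0} \<subseteq> {p \<in> ball 0 (r+1). qf q p = 0}" by auto
      show "\<forall>i\<in>{p \<in> ball 0 (r+1). qf q p = 0} - {p \<in> ball 0 r. qf q p = 0}.
              winding_number (circlepath 0 r) i * of_int (zorder (qf q) i) = 0"
      proof
        fix i assume i: "i \<in> {p \<in> ball 0 (r+1). qf q p = 0} - {p \<in> ball 0 r. qf q p = 0}"
        then have "norm i \<ge> r" "qf q i = 0" by auto
        moreover have "norm i \<noteq> r" using nz \<open>qf q i = 0\<close> by auto
        ultimately have "i \<notin> cball 0 r" by auto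
        then have "winding_number (circlepath 0 r) i = 0"
          using r0 by (intro winding_number_zero_outside[of _ "cball 0 r"])
            (auto simp: valid_path_imp_path sphere_cball)
        then show "winding_number (circlepath 0 r) i * of_int (zorder (qf q) i) = 0" by simp
      qed
    qed
    also have "\<dots> = (\<Sum>p\<in>{p \<in> ball 0 r. qf q p = 0}. of_int (zorder (qf q) p))"
      by (intro sum.cong refl) (auto simp: winding_number_circlepath)
    also have "\<dots> = of_int (\<Sum>z \<in> {z \<in> ball 0 r. qf q z = 0}. zorder (qf q) z)"
      by simp
    finally show ?thesis .
  qed
  have Rt: "(\<Sum>p\<in>{p \<in> ball 0 (r+1). fk p = 0}. winding_number (circlepath 0 r) p * zorder fk p) = of_int (int k)"
  proof (cases "k = 0")
    case True
    then have e: "{p \<in> ball 0 (r+1). fk p = 0} = {}" using cq0 by (auto simp: fk_def)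
    show ?thesis unfolding e using True by simp
  next
    case False
    then have e: "{p \<in> ball 0 (r+1). fk p = 0} = {0}" using r0 by (auto simp: fk_def cq0)
    have "zorder fk 0 = int k"
      by (rule zorder_eqI[of UNIV 0 "\<lambda>_. cq q k"]) (auto simp: fk_def cq0)
    then show ?thesis unfolding e using r0 by (simp add: winding_number_circlepath_centre)
  qed
  have "of_int (\<Sum>z \<in> {z \<in> ball 0 r. qf q z = 0}. zorder (qf q) z) = (of_int (int k) :: complex)"
  proof -
    have fgp: "\<And>p. fk p + gk p = qf q p" using fg by (simp add: fun_eq_iff)
    show ?thesis using R L Rt unfolding fg by (simp add: fgp)
  qed
  then have "(\<Sum>z \<in> {z \<in> ball 0 r. qf q z = 0}. zorder (qf q) z) = int k"
    using of_int_eq_iff by blast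
  then show ?thesis using fin nz by simp
qed

end
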